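(* Let $K\ge2$, $\varepsilon>0$ and $\gamma\in\mathcal{P}^\varepsilon(K)$. The function $$V_\gamma(F)=\log\Big(\sum_{k=1}^K\gamma_ke^{F_k}\Big)-\sum_{k=1}^K\gamma_kF_k,\qquad F\in\mathbb{R}^K,$$ is a candidate Lyapunov function for the equilibrium $F^*=0$ (modulo constants): $V_\gamma(F)\ge0$ with equality if and only if $\|F\|_{\mathbb L}=0$, and there exist $\alpha_1,\alpha_2\in\mathcal K_\infty$ such that $\alpha_1(\|F\|_{\mathbb L})\le V_\gamma(F)\le\alpha_2(\|F\|_{\mathbb L})$ for all $F\in\mathbb{R}^K$.
   Context: $\mathcal{P}^\varepsilon(K)$ is the set of probability vectors on $\{1,\dots,K\}$ with entries $\ge\varepsilon$. $\|F\|_{\mathbb L}=\inf_{\alpha\in\mathbb{R}}\|F-\alpha\mathbf 1\|$ (Euclidean norm, $\mathbf 1=(1,\dots,1)$), so $\|F\|_{\mathbb L}=0$ iff all $F_k$ are equal. A function $\alpha:\mathbb{R}_{\ge0}\to\mathbb{R}_{\ge0}$ is of class $\mathcal K_\infty$ if it is continuous, $\alpha(0)=0$, strictly increasing and unbounded. *)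

theory Defs
  imports "HOL-Analysis.Analysis"
begin

definition prob_eps :: "real \<Rightarrow> (real ^ 'n::finite) set" where
  "prob_eps eps = {g. (\<forall>k. g $ k \<ge> eps) \<and> (\<Sum>k\<in>UNIV. g $ k) = 1}"

definition normL :: "real ^ 'n::finite \<Rightarrow> real" where
  "normL F = (INF a\<in>(UNIV::real set). norm (F - (\<chi> k. a)))"

definition Kinf :: "(real \<Rightarrow> real) \<Rightarrow> bool" where
  "Kinf al \<longleftrightarrow> (\<forall>x\<ge>0. al x \<ge> 0) \<and> continuous_on {0..} al \<and> al 0 = 0
     \<and> strict_mono_on {0..} al \<and> (\<forall>M. \<exists>x\<ge>0. al x > M)"

definition Vgam :: "real ^ 'n::finite \<Rightarrow> real ^ 'n \<Rightarrow> real" where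
  "Vgam g F = ln (\<Sum>k\<in>UNIV. g $ k * exp (F $ k)) - (\<Sum>k\<in>UNIV. g $ k * F $ k)"

end

theory Submission
  imports Defs
begin

lemma exp_sq_bound: fixes d :: real assumes "d \<ge> 0"
  shows "exp d \<ge> 1 + d + d^2/4"
proof -
  have "exp d = exp (d/2) ^ 2" by (simp add: power2_eq_square flip: exp_add)
  moreover have "1 + d/2 \<le> exp (d/2)" by (rule exp_ge_add_one_self)
  hence "(1 + d/2)^2 \<le> exp (d/2) ^ 2" using assms by (intro power_mono) auto
  ultimately show ?thesis by (simp add: power2_eq_square algebra_simps)
qed

lemma phi_mono: fixes a b :: real assumes "0 \<le> a" "a < b"
  shows "exp a - 1 - a < exp b - 1 - b"
proof -
  have d: "exp (b - a) \<ge> 1 + (b-a) + (b-a)^2/4" using exp_sq_bound[of "b-a"] assms by simp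
  have "(b-a)^2 > 0" using assms by simp
  hence "exp (b - a) - 1 > b - a" using d by linarith
  moreover have "exp a \<ge> 1" using assms by simp
  moreover have "exp b = exp a * exp (b - a)" by (simp flip: exp_add)
  ultimately have "exp a * (exp (b - a) - 1) \<ge> 1 * (exp (b - a) - 1)"
    using assms by (intro mult_right_mono) auto
  hence "exp b - exp a \<ge> exp (b - a) - 1"
    using \<open>exp b = exp a * exp (b - a)\<close> by (simp add: algebra_simps)
  hence "exp b - exp a > b - a" using \<open>exp (b - a) - 1 > b - a\<close> by linarith
  thus ?thesis by simp
qed

lemma phi_nonneg: fixes a :: real shows "0 \<le> exp a - 1 - a"
  using exp_ge_add_one_self[of a] by linarith

definition a1f :: "real \<Rightarrow> real \<Rightarrow> real \<Rightarrow> real" where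
  "a1f e c x = ln (1 + e * (exp (c*x) - 1 - c*x))"

lemma a1f_pos: fixes e c x :: real assumes "e > 0" shows "0 < 1 + e * (exp (c*x) - 1 - c*x)"
proof -
  have "0 \<le> e * (exp (c*x) - 1 - c*x)" using phi_nonneg[of "c*x"] assms by simp
  thus ?thesis by linarith
qed

lemma a1f_Kinf: assumes "e > 0" "c > 0" shows "Kinf (a1f e c)"
  unfolding Kinf_def
proof (intro conjI allI impI)
  fix x :: real assume "x \<ge> 0"
  thus "0 \<le> a1f e c x" unfolding a1f_def using phi_nonneg[of "c*x"] assms by simp
next
  show "continuous_on {0..} (a1f e c)" unfolding a1f_def
    by (intro continuous_intros) (metis a1f_pos[OF assms(1)] less_irrefl)
next
  show "a1f e c 0 = 0" by (simp add: a1f_def)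
next
  show "strict_mono_on {0..} (a1f e c)"
  proof (rule strict_mono_onI)
    fix u v :: real assume "u \<in> {0..}" "v \<in> {0..}" "u < v"
    hence "exp (c * u) - 1 - c * u < exp (c * v) - 1 - c * v" using assms
      by (intro phi_mono) auto
    hence "e * (exp (c * u) - 1 - c * u) < e * (exp (c * v) - 1 - c * v)" using assms by simp
    moreover have "0 < 1 + e * (exp (c * u) - 1 - c * u)" by (rule a1f_pos[OF assms(1)])
    ultimately show "a1f e c u < a1f e c v" unfolding a1f_def by simp
  qed
next
  fix M :: real
  define y where "y = 4 * exp M / e + 4"
  have y0: "y \<ge> 0" using assms by (simp add: y_def)
  have "exp y - 1 - y \<ge> y^2/4" using exp_sq_bound[OF y0] by simp
  moreover have "y^2/4 \<ge> y - 1" using zero_le_power2[of "y-2"] by (simp add: power2_eq_square algebra_simps)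
  ultimately have "e * (exp y - 1 - y) \<ge> e * (y - 1)" using assms by simp
  moreover have "e * (y - 1) > exp M" using assms by (simp add: y_def algebra_simps add_pos_pos)
  ultimately have "1 + e * (exp y - 1 - y) > exp M" by simp
  hence "ln (1 + e * (exp y - 1 - y)) > M"
    by (metis exp_gt_zero ln_less_cancel_iff ln_exp order.strict_trans)
  hence "a1f e c (y / c) > M" unfolding a1f_def using assms by simp
  moreover have "y / c \<ge> 0" using y0 assms by simp
  ultimately show "\<exists>x\<ge>0. M < a1f e c x" by blast
qed

lemma lin_Kinf: "Kinf (\<lambda>x. 2 * x)"
  unfolding Kinf_def
proof (intro conjI allI impI)
  show "continuous_on {0..} (\<lambda>x::real. 2 * x)" by (intro continuous_intros)
  show "strict_mono_on {0..} (\<lambda>x::real. 2 * x)" by (rule strict_mono_onI) simp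
  fix M :: real
  show "\<exists>x\<ge>0. M < 2 * x" by (rule exI[of _ "\<bar>M\<bar> + 1"]) simp
qed simp_all

lemma phi_mono_le: fixes a b :: real assumes "0 \<le> a" "a \<le> b"
  shows "exp a - 1 - a \<le> exp b - 1 - b"
  using phi_mono[of a b] assms by (cases "a = b") auto

lemma ex_max_min: fixes F :: "real ^ 'n::finite"
  shows "\<exists>i j. \<forall>k. F $ j \<le> F $ k \<and> F $ k \<le> F $ i"
proof -
  let ?R = "range (\<lambda>k. F $ k)"
  have fin: "finite ?R" and ne: "?R \<noteq> {}" by auto
  obtain i where i: "F $ i = Max ?R" using Max_in[OF fin ne] by (metis rangeE)
  obtain j where j: "F $ j = Min ?R" using Min_in[OF fin ne] by (metis rangeE)
  have "\<forall>k. F $ j \<le> F $ k \<and> F $ k \<le> F $ i"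
    using i j fin by auto
  thus ?thesis by blast
qed

lemma normL_lower: fixes F :: "real ^ 'n::finite"
  assumes "\<forall>k. F $ j \<le> F $ k \<and> F $ k \<le> F $ i"
  shows "(F $ i - F $ j) / 2 \<le> normL F"
  unfolding normL_def
proof (rule cINF_greatest)
  show "(UNIV::real set) \<noteq> {}" by simp
  fix a :: real
  have 1: "\<bar>F $ i - a\<bar> \<le> norm (F - (\<chi> k. a))"
    using component_le_norm_cart[of "F - (\<chi> k. a)" i] by simp
  have 2: "\<bar>F $ j - a\<bar> \<le> norm (F - (\<chi> k. a))"
    using component_le_norm_cart[of "F - (\<chi> k. a)" j] by simp
  have "F $ i - a \<le> norm (F - (\<chi> k. a))" "a - F $ j \<le> norm (F - (\<chi> k. a))"
    using 1 2 by (simp_all add: abs_le_iff)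
  thus "(F $ i - F $ j) / 2 \<le> norm (F - (\<chi> k. a))" by (simp add: field_simps)
qed

lemma normL_upper: fixes F :: "real ^ 'n::finite"
  assumes "\<forall>k. F $ j \<le> F $ k \<and> F $ k \<le> F $ i"
  shows "normL F \<le> real CARD('n) * (F $ i - F $ j)"
proof -
  have "normL F \<le> norm (F - (\<chi> k. F $ j))"
    unfolding normL_def
    by (rule cINF_lower) (auto intro: bdd_belowI[of _ 0])
  also have "\<dots> \<le> (\<Sum>k\<in>UNIV. \<bar>(F - (\<chi> k. F $ j)) $ k\<bar>)" by (rule norm_le_l1_cart)
  also have "\<dots> \<le> real (card (UNIV::'n set)) * (F $ i - F $ j)"
    by (rule sum_bounded_above) (use assms in auto)
  finally show ?thesis by simp
qed

lemma V_upper: fixes F g :: "real ^ 'n::finite"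
  assumes g: "g \<in> prob_eps eps" "eps > 0"
  and ij: "\<forall>k. F $ j \<le> F $ k \<and> F $ k \<le> F $ i"
  shows "Vgam g F \<le> F $ i - F $ j"
proof -
  have geps: "\<And>k. g $ k \<ge> eps" using g unfolding prob_eps_def by force
  have gpos: "\<And>k. g $ k > 0" using geps g(2) by (meson less_le_trans)
  have gs: "(\<Sum>k\<in>UNIV. g $ k) = 1" using g unfolding prob_eps_def by auto
  have "(\<Sum>k\<in>UNIV. g $ k * exp (F $ k)) \<le> (\<Sum>k\<in>UNIV. g $ k * exp (F $ i))"
    by (rule sum_mono) (use gpos ij in \<open>auto intro: mult_left_mono\<close>)
  also have "\<dots> = exp (F $ i)" using gs by (simp add: sum_distrib_right[symmetric])
  finally have S: "(\<Sum>k\<in>UNIV. g $ k * exp (F $ k)) \<le> exp (F $ i)" .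
  have Sp: "(\<Sum>k\<in>UNIV. g $ k * exp (F $ k)) > 0"
    by (rule sum_pos) (use gpos in auto)
  have l: "ln (\<Sum>k\<in>UNIV. g $ k * exp (F $ k)) \<le> F $ i"
    using S Sp by (metis ln_exp ln_le_cancel_iff exp_gt_zero)
  have "(\<Sum>k\<in>UNIV. g $ k * F $ j) \<le> (\<Sum>k\<in>UNIV. g $ k * F $ k)"
    by (rule sum_mono) (use gpos ij in \<open>auto intro: mult_left_mono\<close>)
  moreover have "(\<Sum>k\<in>UNIV. g $ k * F $ j) = F $ j" using gs by (simp add: sum_distrib_right[symmetric])
  ultimately show ?thesis using l unfolding Vgam_def by linarith
qed

lemma V_lower: fixes F g :: "real ^ 'n::finite"
  assumes g: "g \<in> prob_eps eps" "eps > 0"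
  and ij: "\<forall>k. F $ j \<le> F $ k \<and> F $ k \<le> F $ i"
  shows "ln (1 + eps * (exp (eps * (F $ i - F $ j)) - 1 - eps * (F $ i - F $ j))) \<le> Vgam g F"
proof -
  define D where "D = F $ i - F $ j"
  have D0: "D \<ge> 0" using ij by (simp add: D_def)
  have geps: "\<And>k. g $ k \<ge> eps" using g unfolding prob_eps_def by force
  have gpos: "\<And>k. g $ k > 0" using geps g(2) by (meson less_le_trans)
  have gs: "(\<Sum>k\<in>UNIV. g $ k) = 1" using g unfolding prob_eps_def by auto
  define m where "m = (\<Sum>k\<in>UNIV. g $ k * F $ k)"
  define ph where "ph = (\<lambda>x::real. exp x - 1 - x)"
  have phn: "\<And>x. ph x \<ge> 0" unfolding ph_def by (rule phi_nonneg)
  have "F $ i - m = (\<Sum>k\<in>UNIV. g $ k * (F $ i - F $ k))"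
    using gs by (simp add: m_def right_diff_distrib sum_subtractf sum_distrib_right[symmetric])
  also have "\<dots> \<ge> g $ j * (F $ i - F $ j)"
    by (rule member_le_sum) (use gpos ij in \<open>auto intro!: mult_nonneg_nonneg simp: less_imp_le\<close>)
  finally have "F $ i - m \<ge> g $ j * D" by (simp add: D_def)
  moreover have "g $ j * D \<ge> eps * D" using geps D0 by (simp add: mult_right_mono)
  ultimately have xi: "F $ i - m \<ge> eps * D" by linarith
  have E0: "(\<Sum>k\<in>UNIV. g $ k * exp (F $ k - m))
      = (\<Sum>k\<in>UNIV. g $ k * (1 + (F $ k - m))) + (\<Sum>k\<in>UNIV. g $ k * ph (F $ k - m))"
    by (simp add: ph_def sum.distrib[symmetric] algebra_simps)
  have E1: "(\<Sum>k\<in>UNIV. g $ k * (1 + (F $ k - m))) = 1"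
    using gs by (simp add: m_def algebra_simps sum.distrib sum_subtractf sum_distrib_right[symmetric])
  have E2: "(\<Sum>k\<in>UNIV. g $ k * ph (F $ k - m)) \<ge> g $ i * ph (F $ i - m)"
    by (rule member_le_sum) (use gpos phn in \<open>auto intro!: mult_nonneg_nonneg simp: less_imp_le\<close>)
  have A: "(\<Sum>k\<in>UNIV. g $ k * exp (F $ k - m)) \<ge> 1 + g $ i * ph (F $ i - m)"
    using E0 E1 E2 by linarith
  have "ph (F $ i - m) \<ge> ph (eps * D)"
    unfolding ph_def by (rule phi_mono_le) (use xi D0 g(2) in auto)
  hence "g $ i * ph (F $ i - m) \<ge> eps * ph (eps * D)"
    using geps[of i] phn[of "eps * D"] g(2) by (intro mult_mono) auto
  with A have B: "(\<Sum>k\<in>UNIV. g $ k * exp (F $ k - m)) \<ge> 1 + eps * ph (eps * D)" by linarith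
  have C: "(\<Sum>k\<in>UNIV. g $ k * exp (F $ k)) = exp m * (\<Sum>k\<in>UNIV. g $ k * exp (F $ k - m))"
    by (simp add: sum_distrib_left exp_diff)
  have pos: "1 + eps * ph (eps * D) > 0" using phn g(2)
    by (metis add_pos_nonneg mult_nonneg_nonneg order_less_imp_le zero_less_one)
  have "ln (exp m * (1 + eps * ph (eps * D))) \<le> ln (\<Sum>k\<in>UNIV. g $ k * exp (F $ k))"
    unfolding C using B pos by (simp)
  moreover have "ln (exp m * (1 + eps * ph (eps * D))) = m + ln (1 + eps * ph (eps * D))"
    using pos by (simp add: ln_mult)
  ultimately show ?thesis unfolding Vgam_def m_def[symmetric] by (simp add: ph_def D_def)
qed

theorem lemma2:
  fixes g :: "real ^ 'n::finite" and eps :: real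
  assumes "CARD('n) \<ge> 2" and "eps > 0" and "g \<in> prob_eps eps"
  shows "(\<forall>F. Vgam g F \<ge> 0) \<and> (\<forall>F. Vgam g F = 0 \<longleftrightarrow> normL F = 0)
    \<and> (\<exists>a1 a2. Kinf a1 \<and> Kinf a2 \<and>
         (\<forall>F. a1 (normL F) \<le> Vgam g F \<and> Vgam g F \<le> a2 (normL F)))"
proof -
  define c where "c = eps / real CARD('n)"
  have Kp: "real CARD('n) > 0" by simp
  have c0: "c > 0" using assms(2) Kp by (simp add: c_def)
  define a1 where "a1 = a1f eps c"
  have K1: "Kinf a1" unfolding a1_def by (rule a1f_Kinf[OF assms(2) c0])
  have bnd: "a1 (normL F) \<le> Vgam g F \<and> Vgam g F \<le> 2 * normL F \<and> normL F \<ge> 0" for F :: "real ^ 'n"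
  proof -
    obtain i j where ij: "\<forall>k. F $ j \<le> F $ k \<and> F $ k \<le> F $ i" using ex_max_min by blast
    define D where "D = F $ i - F $ j"
    have D0: "D \<ge> 0" using ij by (simp add: D_def)
    have L1: "D / 2 \<le> normL F" using normL_lower[OF ij] by (simp add: D_def)
    have L2: "normL F \<le> real CARD('n) * D" using normL_upper[OF ij] by (simp add: D_def)
    have L0: "normL F \<ge> 0" using L1 D0 by linarith
    have cL0: "c * normL F \<ge> 0" using c0 L0 by simp
    have "c * normL F \<le> c * (real CARD('n) * D)" using L2 c0 by simp
    also have "\<dots> = eps * D" using Kp by (simp add: c_def)
    finally have cL: "c * normL F \<le> eps * D" .
    have ph: "exp (c * normL F) - 1 - c * normL F \<le> exp (eps * D) - 1 - eps * D"
      by (rule phi_mono_le[OF cL0 cL])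
    have "a1 (normL F) \<le> ln (1 + eps * (exp (eps * D) - 1 - eps * D))"
      unfolding a1_def a1f_def
      using ph assms(2) a1f_pos[OF assms(2), of c "normL F"] a1f_pos[OF assms(2), of eps D]
      by (subst ln_le_cancel_iff) auto
    also have "\<dots> \<le> Vgam g F" using V_lower[OF assms(3) assms(2) ij] by (simp add: D_def)
    finally have A: "a1 (normL F) \<le> Vgam g F" .
    have "Vgam g F \<le> D" using V_upper[OF assms(3) assms(2) ij] by (simp add: D_def)
    thus ?thesis using A L1 L0 by linarith
  qed
  have a10: "a1 0 = 0" and a1nn: "\<And>x. x \<ge> 0 \<Longrightarrow> a1 x \<ge> 0" and a1sm: "strict_mono_on {0..} a1"
    using K1 unfolding Kinf_def by auto
  have nonneg: "Vgam g F \<ge> 0" for F using bnd[of F] a1nn[of "normL F"] by linarith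
  have eq: "Vgam g F = 0 \<longleftrightarrow> normL F = 0" for F
  proof
    assume V0: "Vgam g F = 0"
    show "normL F = 0"
    proof (rule ccontr)
      assume "normL F \<noteq> 0"
      hence "normL F > 0" using bnd[of F] by linarith
      hence "a1 0 < a1 (normL F)" using a1sm by (auto intro: strict_mono_onD)
      thus False using bnd[of F] V0 a10 by linarith
    qed
  next
    assume "normL F = 0"
    thus "Vgam g F = 0" using bnd[of F] nonneg[of F] by linarith
  qed
  show ?thesis
    using nonneg eq K1 lin_Kinf bnd by blast
qed

end
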